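(* Let $G$ be a multiplicative monoid with identity, let $N$ be a $G$-graded near-ring and let $P$, $I$ be graded ideals of $N$ with $I\subseteq P$. Let $\pi:N\to\bar N:=N/I$ be the canonical epimorphism. If $P$ is a graded almost prime ideal of $N$, then $\pi(P)$ is a graded almost prime ideal of $\bar N$.
   Context: A near-ring $(N,+,\cdot)$ is a set with two binary operations such that $(N,+)$ is a group (not necessarily abelian), $(N,\cdot)$ is a semigroup, and $(a+b)y = ay+by$ for all $a,b,y\in N$. For a multiplicative monoid $G$ with identity, $N$ is a $G$-graded near-ring if there is a family $\{N_\sigma\}_{\sigma\in G}$ of additive normal subgroups of $N$ with $N=\bigoplus_{\sigma\in G}N_\sigma$ and $N_\sigma N_\tau\subseteq N_{\sigma\tau}$. An ideal $P$ is graded if $P=\bigoplus_{\sigma}(P\cap N_\sigma)$; for a graded ideal $I$, $N/I$ is $G$-graded with components $(N_\sigma+I)/I$. For ideals $I,J$, $IJ$ denotes their product and $P^2=PP$ (the paper writes $P^2\cap N$, with $N$ the ambient near-ring). A graded ideal $P$ is graded almost prime if for all graded ideals $I,J$ with $IJ\subseteq P$ and $IJ\not\subseteq P^2\cap N$, either $I\subseteq P$ or $J\subseteq P$. *)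

theory Defs
  imports Main
begin

record 'a nearring =
  carrier :: "'a set"
  nadd :: "'a \<Rightarrow> 'a \<Rightarrow> 'a"
  nmul :: "'a \<Rightarrow> 'a \<Rightarrow> 'a"
  nzero :: 'a
  nneg :: "'a \<Rightarrow> 'a"

definition nsub :: "('a, 'b) nearring_scheme \<Rightarrow> 'a \<Rightarrow> 'a \<Rightarrow> 'a" where
  "nsub R x y = nadd R x (nneg R y)"

definition near_ring :: "('a, 'b) nearring_scheme \<Rightarrow> bool" where
  "near_ring R \<longleftrightarrow>
     (\<forall>x\<in>carrier R. \<forall>y\<in>carrier R. nadd R x y \<in> carrier R \<and> nmul R x y \<in> carrier R) \<and>
     nzero R \<in> carrier R \<and> (\<forall>x\<in>carrier R. nneg R x \<in> carrier R) \<and>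
     (\<forall>x\<in>carrier R. \<forall>y\<in>carrier R. \<forall>z\<in>carrier R.
        nadd R (nadd R x y) z = nadd R x (nadd R y z)) \<and>
     (\<forall>x\<in>carrier R. nadd R (nzero R) x = x \<and> nadd R x (nzero R) = x) \<and>
     (\<forall>x\<in>carrier R. nadd R (nneg R x) x = nzero R \<and> nadd R x (nneg R x) = nzero R) \<and>
     (\<forall>x\<in>carrier R. \<forall>y\<in>carrier R. \<forall>z\<in>carrier R.
        nmul R (nmul R x y) z = nmul R x (nmul R y z)) \<and>
     (\<forall>a\<in>carrier R. \<forall>b\<in>carrier R. \<forall>y\<in>carrier R.
        nmul R (nadd R a b) y = nadd R (nmul R a y) (nmul R b y))"

definition add_normal_subgroup :: "('a, 'b) nearring_scheme \<Rightarrow> 'a set \<Rightarrow> bool" where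
  "add_normal_subgroup R H \<longleftrightarrow>
     H \<subseteq> carrier R \<and> nzero R \<in> H \<and>
     (\<forall>x\<in>H. \<forall>y\<in>H. nadd R x y \<in> H) \<and> (\<forall>x\<in>H. nneg R x \<in> H) \<and>
     (\<forall>n\<in>carrier R. \<forall>h\<in>H. nsub R (nadd R n h) n \<in> H)"

definition nr_ideal :: "('a, 'b) nearring_scheme \<Rightarrow> 'a set \<Rightarrow> bool" where
  "nr_ideal R I \<longleftrightarrow>
     add_normal_subgroup R I \<and>
     (\<forall>i\<in>I. \<forall>n\<in>carrier R. nmul R i n \<in> I) \<and>
     (\<forall>n\<in>carrier R. \<forall>n'\<in>carrier R. \<forall>i\<in>I.
        nsub R (nmul R n (nadd R n' i)) (nmul R n n') \<in> I)"

inductive_set gen_add :: "('a, 'b) nearring_scheme \<Rightarrow> 'a set \<Rightarrow> 'a set"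
  for R :: "('a, 'b) nearring_scheme" and S :: "'a set" where
  gen_incl: "x \<in> S \<Longrightarrow> x \<in> gen_add R S"
| gen_zero: "nzero R \<in> gen_add R S"
| gen_neg: "x \<in> gen_add R S \<Longrightarrow> nneg R x \<in> gen_add R S"
| gen_add: "x \<in> gen_add R S \<Longrightarrow> y \<in> gen_add R S \<Longrightarrow> nadd R x y \<in> gen_add R S"

definition internal_direct_sum ::
  "('a, 'b) nearring_scheme \<Rightarrow> 'a set \<Rightarrow> ('g \<Rightarrow> 'a set) \<Rightarrow> bool" where
  "internal_direct_sum R A F \<longleftrightarrow>
     A = gen_add R (\<Union>\<sigma>. F \<sigma>) \<and>
     (\<forall>\<sigma>. F \<sigma> \<inter> gen_add R (\<Union>\<tau>\<in>-{\<sigma>}. F \<tau>) = {nzero R})"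

definition graded_near_ring ::
  "('a, 'b) nearring_scheme \<Rightarrow> ('g::monoid_mult \<Rightarrow> 'a set) \<Rightarrow> bool" where
  "graded_near_ring R F \<longleftrightarrow>
     near_ring R \<and> (\<forall>\<sigma>. add_normal_subgroup R (F \<sigma>)) \<and>
     internal_direct_sum R (carrier R) F \<and>
     (\<forall>\<sigma> \<tau>. \<forall>x\<in>F \<sigma>. \<forall>y\<in>F \<tau>. nmul R x y \<in> F (\<sigma> * \<tau>))"

definition graded_ideal ::
  "('a, 'b) nearring_scheme \<Rightarrow> ('g::monoid_mult \<Rightarrow> 'a set) \<Rightarrow> 'a set \<Rightarrow> bool" where
  "graded_ideal R F P \<longleftrightarrow> nr_ideal R P \<and> internal_direct_sum R P (\<lambda>\<sigma>. P \<inter> F \<sigma>)"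

definition set_prod :: "('a, 'b) nearring_scheme \<Rightarrow> 'a set \<Rightarrow> 'a set \<Rightarrow> 'a set" where
  "set_prod R I J = {nmul R i j | i j. i \<in> I \<and> j \<in> J}"

definition graded_almost_prime ::
  "('a, 'b) nearring_scheme \<Rightarrow> ('g::monoid_mult \<Rightarrow> 'a set) \<Rightarrow> 'a set \<Rightarrow> bool" where
  "graded_almost_prime R F P \<longleftrightarrow>
     graded_ideal R F P \<and>
     (\<forall>I J. graded_ideal R F I \<and> graded_ideal R F J \<and>
        set_prod R I J \<subseteq> P \<and> \<not> set_prod R I J \<subseteq> set_prod R P P \<inter> carrier R
        \<longrightarrow> I \<subseteq> P \<or> J \<subseteq> P)"

text \<open>Quotient near-ring N/I: elements are the cosets a + I; operations via
  representatives (well defined when I is an ideal).\<close>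

definition coset :: "('a, 'b) nearring_scheme \<Rightarrow> 'a set \<Rightarrow> 'a \<Rightarrow> 'a set" where
  "coset R I a = {nadd R a i | i. i \<in> I}"

definition quot :: "('a, 'b) nearring_scheme \<Rightarrow> 'a set \<Rightarrow> 'a set nearring" where
  "quot R I =
     \<lparr> carrier = coset R I ` carrier R,
       nadd = (\<lambda>A B. \<Union>{coset R I (nadd R x y) | x y. x \<in> A \<and> y \<in> B}),
       nmul = (\<lambda>A B. \<Union>{coset R I (nmul R x y) | x y. x \<in> A \<and> y \<in> B}),
       nzero = coset R I (nzero R),
       nneg = (\<lambda>A. \<Union>{coset R I (nneg R x) | x. x \<in> A}) \<rparr>"

text \<open>Canonical grading of N/I: components (N_sigma + I)/I = pi(N_sigma).\<close>

definition quot_grading ::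
  "('a, 'b) nearring_scheme \<Rightarrow> 'a set \<Rightarrow> ('g \<Rightarrow> 'a set) \<Rightarrow> 'g \<Rightarrow> 'a set set" where
  "quot_grading R I F = (\<lambda>\<sigma>. coset R I ` F \<sigma>)"

end

theory Submission
  imports Defs
begin



lemma gen_mono: "S \<subseteq> T \<Longrightarrow> gen_add R S \<subseteq> gen_add R T"
proof
  fix x assume st: "S \<subseteq> T" and x: "x \<in> gen_add R S"
  from x show "x \<in> gen_add R T"
    using st by (induction rule: gen_add.induct) (auto intro: gen_add.intros)
qed

lemma gen_least:
  assumes "add_normal_subgroup R H" "S \<subseteq> H"
  shows "gen_add R S \<subseteq> H"
proof
  fix x assume "x \<in> gen_add R S"
  then show "x \<in> H" using assms
    by (induction rule: gen_add.induct) (auto simp: add_normal_subgroup_def)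
qed

locale nr =
  fixes R :: "('a, 'b) nearring_scheme"
  assumes nr: "near_ring R"
begin

abbreviation pl (infixr "\<oplus>" 65) where "x \<oplus> y \<equiv> nadd R x y"
abbreviation ng ("\<ominus> _" [81] 80) where "\<ominus> x \<equiv> nneg R x"
abbreviation zr ("\<zero>") where "\<zero> \<equiv> nzero R"
abbreviation ml (infixl "\<otimes>" 70) where "x \<otimes> y \<equiv> nmul R x y"
abbreviation "C \<equiv> carrier R"

lemma add_closed[simp,intro]: "x \<in> C \<Longrightarrow> y \<in> C \<Longrightarrow> x \<oplus> y \<in> C"
  and mul_closed[simp,intro]: "x \<in> C \<Longrightarrow> y \<in> C \<Longrightarrow> x \<otimes> y \<in> C"
  and zero_closed[simp,intro]: "\<zero> \<in> C"
  and neg_closed[simp,intro]: "x \<in> C \<Longrightarrow> \<ominus> x \<in> C"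
  using nr unfolding near_ring_def by auto

lemma assoc[simp]: "x \<in> C \<Longrightarrow> y \<in> C \<Longrightarrow> z \<in> C \<Longrightarrow> (x \<oplus> y) \<oplus> z = x \<oplus> (y \<oplus> z)"
  and l_zero[simp]: "x \<in> C \<Longrightarrow> \<zero> \<oplus> x = x"
  and r_zero[simp]: "x \<in> C \<Longrightarrow> x \<oplus> \<zero> = x"
  and l_neg[simp]: "x \<in> C \<Longrightarrow> \<ominus> x \<oplus> x = \<zero>"
  and r_neg[simp]: "x \<in> C \<Longrightarrow> x \<oplus> \<ominus> x = \<zero>"
  and distr: "a \<in> C \<Longrightarrow> b \<in> C \<Longrightarrow> y \<in> C \<Longrightarrow> (a \<oplus> b) \<otimes> y = a \<otimes> y \<oplus> b \<otimes> y"
  using nr unfolding near_ring_def by auto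

lemma l_neg2[simp]: "x \<in> C \<Longrightarrow> y \<in> C \<Longrightarrow> \<ominus> x \<oplus> (x \<oplus> y) = y"
  by (metis assoc l_neg l_zero neg_closed)
lemma r_neg2[simp]: "x \<in> C \<Longrightarrow> y \<in> C \<Longrightarrow> x \<oplus> (\<ominus> x \<oplus> y) = y"
  by (metis assoc r_neg l_zero neg_closed)

lemma neg_unique: "x \<in> C \<Longrightarrow> y \<in> C \<Longrightarrow> x \<oplus> y = \<zero> \<Longrightarrow> y = \<ominus> x"
  by (metis l_neg2 r_zero neg_closed)

lemma neg_neg[simp]: "x \<in> C \<Longrightarrow> \<ominus> (\<ominus> x) = x"
  by (metis l_neg neg_closed neg_unique)

lemma neg_add[simp]: "x \<in> C \<Longrightarrow> y \<in> C \<Longrightarrow> \<ominus> (x \<oplus> y) = \<ominus> y \<oplus> \<ominus> x"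
proof -
  assume a: "x \<in> C" "y \<in> C"
  have "(x \<oplus> y) \<oplus> (\<ominus> y \<oplus> \<ominus> x) = \<zero>" using a by simp
  then show ?thesis using a by (metis neg_unique add_closed neg_closed)
qed

lemma neg_zero[simp]: "\<ominus> \<zero> = \<zero>"
  by (metis l_zero neg_closed r_neg zero_closed)

lemma l_cancel[simp]: "x \<in> C \<Longrightarrow> y \<in> C \<Longrightarrow> z \<in> C \<Longrightarrow> (x \<oplus> y = x \<oplus> z) = (y = z)"
  by (metis l_neg2)
lemma r_cancel[simp]: "x \<in> C \<Longrightarrow> y \<in> C \<Longrightarrow> z \<in> C \<Longrightarrow> (y \<oplus> x = z \<oplus> x) = (y = z)"
  by (metis assoc r_neg r_zero neg_closed)

lemma nsub_eq: "nsub R x y = x \<oplus> \<ominus> y" by (simp add: nsub_def)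

lemma gen_carrier: "S \<subseteq> C \<Longrightarrow> gen_add R S \<subseteq> C"
proof
  fix x assume st: "S \<subseteq> C" and x: "x \<in> gen_add R S"
  from x show "x \<in> C" using st by (induction rule: gen_add.induct) auto
qed

lemma ns_sub: "add_normal_subgroup R H \<Longrightarrow> H \<subseteq> C"
  and ns_zero: "add_normal_subgroup R H \<Longrightarrow> \<zero> \<in> H"
  and ns_add: "add_normal_subgroup R H \<Longrightarrow> x \<in> H \<Longrightarrow> y \<in> H \<Longrightarrow> x \<oplus> y \<in> H"
  and ns_neg: "add_normal_subgroup R H \<Longrightarrow> x \<in> H \<Longrightarrow> \<ominus> x \<in> H"
  unfolding add_normal_subgroup_def by auto

lemma ns_conj: "add_normal_subgroup R H \<Longrightarrow> n \<in> C \<Longrightarrow> h \<in> H \<Longrightarrow> n \<oplus> h \<oplus> \<ominus> n \<in> H"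
  unfolding add_normal_subgroup_def nsub_eq
  by (metis assoc neg_closed subsetD)

lemma ns_conj': "add_normal_subgroup R H \<Longrightarrow> n \<in> C \<Longrightarrow> h \<in> H \<Longrightarrow> \<ominus> n \<oplus> h \<oplus> n \<in> H"
  using ns_conj[of H "\<ominus> n" h] by simp

lemma gen_conj:
  assumes "S \<subseteq> C" "\<And>n s. n \<in> C \<Longrightarrow> s \<in> S \<Longrightarrow> n \<oplus> s \<oplus> \<ominus> n \<in> gen_add R S"
    and "n \<in> C" "h \<in> gen_add R S"
  shows "n \<oplus> h \<oplus> \<ominus> n \<in> gen_add R S"
  using assms(4)
proof (induction rule: gen_add.induct)
  case (gen_incl x) then show ?case using assms by auto
next
  case gen_zero then show ?case using assms by (simp add: gen_add.gen_zero)
next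
  case (gen_neg x)
  have x: "x \<in> C" using gen_neg gen_carrier assms(1) by auto
  have "\<ominus> (n \<oplus> x \<oplus> \<ominus> n) \<in> gen_add R S" using gen_neg.IH by (rule gen_add.gen_neg)
  then show ?case using x assms(3) by simp
next
  case (gen_add x y)
  have x: "x \<in> C" "y \<in> C" using gen_add gen_carrier assms(1) by auto
  have "(n \<oplus> x \<oplus> \<ominus> n) \<oplus> (n \<oplus> y \<oplus> \<ominus> n) \<in> gen_add R S"
    using gen_add.IH by (rule gen_add.gen_add)
  then show ?case using x assms(3) by simp
qed

lemma gen_ns:
  assumes "S \<subseteq> C" "\<And>n s. n \<in> C \<Longrightarrow> s \<in> S \<Longrightarrow> n \<oplus> s \<oplus> \<ominus> n \<in> gen_add R S"
  shows "add_normal_subgroup R (gen_add R S)"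
  unfolding add_normal_subgroup_def nsub_eq
proof (intro conjI ballI)
  fix n h assume n: "n \<in> C" and h: "h \<in> gen_add R S"
  have "h \<in> C" using h gen_carrier[OF assms(1)] by auto
  then show "(n \<oplus> h) \<oplus> \<ominus> n \<in> gen_add R S" using gen_conj[OF assms n h] n by simp
qed (use gen_carrier[OF assms(1)] in \<open>auto intro: gen_add.intros\<close>)
end




locale qnr = nr +
  fixes I :: "'a set"
  assumes idl: "nr_ideal R I"
begin

abbreviation "Q \<equiv> quot R I"
abbreviation pi where "pi \<equiv> coset R I"

lemma I_ns: "add_normal_subgroup R I" using idl by (simp add: nr_ideal_def)
lemma I_sub: "I \<subseteq> C" using ns_sub[OF I_ns] .
lemma I_C[simp]: "i \<in> I \<Longrightarrow> i \<in> C" using I_sub by auto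
lemma I_zero[simp]: "\<zero> \<in> I" using ns_zero[OF I_ns] .
lemma I_add[simp]: "x \<in> I \<Longrightarrow> y \<in> I \<Longrightarrow> x \<oplus> y \<in> I" using ns_add[OF I_ns] .
lemma I_neg[simp]: "x \<in> I \<Longrightarrow> \<ominus> x \<in> I" using ns_neg[OF I_ns] .
lemma I_conj[simp]: "n \<in> C \<Longrightarrow> h \<in> I \<Longrightarrow> n \<oplus> h \<oplus> \<ominus> n \<in> I" using ns_conj[OF I_ns] .
lemma I_conj'[simp]: "n \<in> C \<Longrightarrow> h \<in> I \<Longrightarrow> \<ominus> n \<oplus> h \<oplus> n \<in> I" using ns_conj'[OF I_ns] .
lemma I_conj'_add[simp]: "n \<in> C \<Longrightarrow> h \<in> I \<Longrightarrow> z \<in> I \<Longrightarrow> \<ominus> n \<oplus> h \<oplus> n \<oplus> z \<in> I"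
proof -
  assume a: "n \<in> C" "h \<in> I" "z \<in> I"
  then have "(\<ominus> n \<oplus> h \<oplus> n) \<oplus> z \<in> I" using I_add[OF I_conj'[OF a(1,2)] a(3)] by simp
  moreover have "(\<ominus> n \<oplus> h \<oplus> n) \<oplus> z = \<ominus> n \<oplus> h \<oplus> n \<oplus> z" using a by simp
  ultimately show ?thesis by metis
qed
lemma I_mul: "i \<in> I \<Longrightarrow> n \<in> C \<Longrightarrow> i \<otimes> n \<in> I" using idl by (simp add: nr_ideal_def)
lemma I_third: "n \<in> C \<Longrightarrow> n' \<in> C \<Longrightarrow> i \<in> I \<Longrightarrow> n \<otimes> (n' \<oplus> i) \<oplus> \<ominus> (n \<otimes> n') \<in> I"
  using idl by (simp add: nr_ideal_def nsub_eq)

lemma coset_mem: "a \<in> C \<Longrightarrow> a \<in> pi a"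
  unfolding coset_def by (rule CollectI, rule exI[of _ \<zero>]) simp

lemma coset_eq_iff: "a \<in> C \<Longrightarrow> b \<in> C \<Longrightarrow> (pi a = pi b) = (\<ominus> b \<oplus> a \<in> I)"
proof
  assume a: "a \<in> C" "b \<in> C" and e: "pi a = pi b"
  then have "a \<in> pi b" using coset_mem by auto
  then obtain i where "i \<in> I" "a = b \<oplus> i" unfolding coset_def by auto
  then show "\<ominus> b \<oplus> a \<in> I" using a by simp
next
  assume a: "a \<in> C" "b \<in> C" and i: "\<ominus> b \<oplus> a \<in> I"
  define i where "i = \<ominus> b \<oplus> a"
  have ai: "a = b \<oplus> i" "b = a \<oplus> \<ominus> i" using a by (simp_all add: i_def)
  have iI: "i \<in> I" "i \<in> C" using i i_def by auto
  show "pi a = pi b"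
  proof
    show "pi a \<subseteq> pi b" unfolding coset_def
    proof (clarify)
      fix j assume "j \<in> I"
      then show "\<exists>k. a \<oplus> j = b \<oplus> k \<and> k \<in> I"
        using iI a by (intro exI[of _ "i \<oplus> j"]) (simp add: ai(1))
    qed
    show "pi b \<subseteq> pi a" unfolding coset_def
    proof (clarify)
      fix j assume "j \<in> I"
      then show "\<exists>k. b \<oplus> j = a \<oplus> k \<and> k \<in> I"
        using iI a by (intro exI[of _ "\<ominus> i \<oplus> j"]) (simp add: ai(2))
    qed
  qed
qed

lemma coset_sub: "a \<in> C \<Longrightarrow> pi a \<subseteq> C"
  unfolding coset_def by auto

lemma mem_coset_eq: "a \<in> C \<Longrightarrow> x \<in> pi a \<Longrightarrow> pi x = pi a"
proof -
  assume a: "a \<in> C" "x \<in> pi a"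
  then obtain i where i: "i \<in> I" "x = a \<oplus> i" unfolding coset_def by auto
  then show ?thesis using a coset_eq_iff[of x a] by simp
qed

lemma coset_zero: "pi \<zero> = I"
  unfolding coset_def by (auto intro!: exI)

lemma coset_in_I: "a \<in> C \<Longrightarrow> (pi a = I) = (a \<in> I)"
  using coset_eq_iff[of a \<zero>] by (simp add: coset_zero)

lemma carrier_Q: "carrier Q = pi ` C" by (simp add: quot_def)

lemma union2:
  assumes "a \<in> C" "b \<in> C" "\<And>x y. x \<in> pi a \<Longrightarrow> y \<in> pi b \<Longrightarrow> pi (f x y) = pi (f a b)"
  shows "\<Union>{pi (f x y) | x y. x \<in> pi a \<and> y \<in> pi b} = pi (f a b)"
  using assms coset_mem[OF assms(1)] coset_mem[OF assms(2)] by blast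

lemma union1:
  assumes "a \<in> C" "\<And>x. x \<in> pi a \<Longrightarrow> pi (f x) = pi (f a)"
  shows "\<Union>{pi (f x) | x. x \<in> pi a} = pi (f a)"
  using assms coset_mem[OF assms(1)] by blast

lemma q_add: "a \<in> C \<Longrightarrow> b \<in> C \<Longrightarrow> nadd Q (pi a) (pi b) = pi (a \<oplus> b)"
  unfolding quot_def
proof (simp, rule union2)
  fix x y assume a: "a \<in> C" "b \<in> C" and x: "x \<in> pi a" "y \<in> pi b"
  then obtain i j where ij: "i \<in> I" "j \<in> I" "x = a \<oplus> i" "y = b \<oplus> j" unfolding coset_def by auto
  have "\<ominus> (a \<oplus> b) \<oplus> (x \<oplus> y) = (\<ominus> b \<oplus> i \<oplus> b) \<oplus> j" using a ij by simp
  also have "\<dots> \<in> I" using a ij by simp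
  finally show "pi (x \<oplus> y) = pi (a \<oplus> b)" using a ij coset_eq_iff by simp
qed auto

lemma q_neg: "a \<in> C \<Longrightarrow> nneg Q (pi a) = pi (\<ominus> a)"
  unfolding quot_def
proof (simp, rule union1)
  fix x assume a: "a \<in> C" and x: "x \<in> pi a"
  then obtain i where ij: "i \<in> I" "x = a \<oplus> i" unfolding coset_def by auto
  have "\<ominus> (\<ominus> a) \<oplus> \<ominus> x = a \<oplus> \<ominus> i \<oplus> \<ominus> a" using a ij by simp
  also have "\<dots> \<in> I" using a ij by simp
  finally show "pi (\<ominus> x) = pi (\<ominus> a)" using a ij coset_eq_iff by simp
qed auto

lemma q_mul: "a \<in> C \<Longrightarrow> b \<in> C \<Longrightarrow> nmul Q (pi a) (pi b) = pi (a \<otimes> b)"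
  unfolding quot_def
proof (simp, rule union2)
  fix x y assume a: "a \<in> C" "b \<in> C" and x: "x \<in> pi a" "y \<in> pi b"
  then obtain i j where ij: "i \<in> I" "j \<in> I" "x = a \<oplus> i" "y = b \<oplus> j" unfolding coset_def by auto
  define k where "k = a \<otimes> (b \<oplus> j) \<oplus> \<ominus> (a \<otimes> b)"
  have k: "k \<in> I" using I_third[of a b j] a ij k_def by simp
  have k2: "a \<otimes> (b \<oplus> j) = k \<oplus> a \<otimes> b" using a ij k_def by simp
  have m: "i \<otimes> (b \<oplus> j) \<in> I" using I_mul ij a by simp
  have "x \<otimes> y = a \<otimes> (b \<oplus> j) \<oplus> i \<otimes> (b \<oplus> j)" using ij a distr by simp
  then have "\<ominus> (a \<otimes> b) \<oplus> (x \<otimes> y) = (\<ominus> (a \<otimes> b) \<oplus> k \<oplus> a \<otimes> b) \<oplus> i \<otimes> (b \<oplus> j)"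
    using k2 a ij k by simp
  also have "\<dots> \<in> I" using a ij k m by simp
  finally show "pi (x \<otimes> y) = pi (a \<otimes> b)" using a ij coset_eq_iff by simp
qed auto

lemma q_zero: "nzero Q = pi \<zero>" by (simp add: quot_def)

lemma q_sub: "a \<in> C \<Longrightarrow> b \<in> C \<Longrightarrow> nsub Q (pi a) (pi b) = pi (a \<oplus> \<ominus> b)"
  by (simp add: nsub_def q_neg q_add)

end



context qnr
begin

lemma carrier_QE: "A \<in> carrier Q \<Longrightarrow> (\<And>a. a \<in> C \<Longrightarrow> A = pi a \<Longrightarrow> P) \<Longrightarrow> P"
  using carrier_Q by auto

lemma ideal_image:
  assumes J: "nr_ideal R J"
  shows "nr_ideal Q (pi ` J)"
proof -
  have ns: "add_normal_subgroup R J" using J by (simp add: nr_ideal_def)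
  have JC: "\<And>j. j \<in> J \<Longrightarrow> j \<in> C" using ns_sub[OF ns] by auto
  have sub: "pi ` J \<subseteq> carrier Q" using JC carrier_Q by auto
  have z: "nzero Q \<in> pi ` J" using q_zero ns_zero[OF ns] by auto
  have ad: "nadd Q x y \<in> pi ` J" if prem: "x \<in> pi ` J" "y \<in> pi ` J" for x y
  proof -
    obtain a b where "a \<in> J" "b \<in> J" "x = pi a" "y = pi b" using prem by blast
    then show ?thesis using q_add JC ns_add[OF ns] by auto
  qed
  have ng: "nneg Q x \<in> pi ` J" if prem: "x \<in> pi ` J" for x
  proof -
    obtain a where "a \<in> J" "x = pi a" using prem by auto
    then show ?thesis using q_neg JC ns_neg[OF ns] by auto
  qed
  have cj: "nsub Q (nadd Q n h) n \<in> pi ` J" if prem: "n \<in> carrier Q" "h \<in> pi ` J" for n h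
  proof -
    obtain a where a: "a \<in> J" "h = pi a" using prem by auto
    obtain m where m: "m \<in> C" "n = pi m" using prem carrier_Q by auto
    have "nsub Q (nadd Q n h) n = pi (m \<oplus> a \<oplus> \<ominus> m)" using a m JC by (simp add: q_add q_sub)
    then show ?thesis using ns_conj[OF ns m(1) a(1)] by auto
  qed
  have ml: "nmul Q i n \<in> pi ` J" if prem: "i \<in> pi ` J" "n \<in> carrier Q" for i n
  proof -
    obtain a where a: "a \<in> J" "i = pi a" using prem by auto
    obtain m where m: "m \<in> C" "n = pi m" using prem carrier_Q by auto
    have "a \<otimes> m \<in> J" using J a m by (simp add: nr_ideal_def)
    then show ?thesis using a m JC by (simp add: q_mul)
  qed
  have th: "nsub Q (nmul Q n (nadd Q n' i)) (nmul Q n n') \<in> pi ` J"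
    if prem: "n \<in> carrier Q" "n' \<in> carrier Q" "i \<in> pi ` J" for n n' i
  proof -
    obtain a where a: "a \<in> J" "i = pi a" using prem by auto
    obtain m where m: "m \<in> C" "n = pi m" using prem carrier_Q by auto
    obtain m' where m': "m' \<in> C" "n' = pi m'" using prem carrier_Q by auto
    have "nsub R (m \<otimes> (m' \<oplus> a)) (m \<otimes> m') \<in> J" using J a m m' by (simp add: nr_ideal_def)
    moreover have "nsub Q (nmul Q n (nadd Q n' i)) (nmul Q n n') = pi (nsub R (m \<otimes> (m' \<oplus> a)) (m \<otimes> m'))"
      using a m m' JC by (simp add: q_add q_mul q_sub nsub_eq)
    ultimately show ?thesis by auto
  qed
  show ?thesis unfolding nr_ideal_def add_normal_subgroup_def
    apply (intro conjI ballI)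
    using sub z ad ng cj ml th by simp_all
qed

definition pre :: "'a set set \<Rightarrow> 'a set" where "pre J' = {x \<in> C. pi x \<in> J'}"

lemma ideal_pre:
  assumes J: "nr_ideal Q J'"
  shows "nr_ideal R (pre J')" and "I \<subseteq> pre J'"
proof -
  have ns: "add_normal_subgroup Q J'" using J by (simp add: nr_ideal_def)
  have z: "nzero Q \<in> J'" using ns by (simp add: add_normal_subgroup_def)
  have ad: "\<And>x y. x \<in> J' \<Longrightarrow> y \<in> J' \<Longrightarrow> nadd Q x y \<in> J'"
    and ng: "\<And>x. x \<in> J' \<Longrightarrow> nneg Q x \<in> J'"
    and cj: "\<And>n h. n \<in> carrier Q \<Longrightarrow> h \<in> J' \<Longrightarrow> nsub Q (nadd Q n h) n \<in> J'"
    using ns by (auto simp: add_normal_subgroup_def)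
  have ml: "\<And>i n. i \<in> J' \<Longrightarrow> n \<in> carrier Q \<Longrightarrow> nmul Q i n \<in> J'"
    and th: "\<And>n n' i. n \<in> carrier Q \<Longrightarrow> n' \<in> carrier Q \<Longrightarrow> i \<in> J' \<Longrightarrow>
        nsub Q (nmul Q n (nadd Q n' i)) (nmul Q n n') \<in> J'"
    using J by (auto simp: nr_ideal_def)
  have piC: "\<And>x. x \<in> C \<Longrightarrow> pi x \<in> carrier Q" using carrier_Q by auto
  show "I \<subseteq> pre J'"
  proof
    fix i assume "i \<in> I"
    then have "pi i = I" using coset_in_I[of i] by simp
    then have "pi i = pi \<zero>" by (simp add: coset_zero)
    then show "i \<in> pre J'" using z q_zero \<open>i \<in> I\<close> by (simp add: pre_def)
  qed
  show "nr_ideal R (pre J')" unfolding nr_ideal_def add_normal_subgroup_def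
  proof (intro conjI ballI)
    show "pre J' \<subseteq> C" by (auto simp: pre_def)
    show "\<zero> \<in> pre J'" using z q_zero by (simp add: pre_def)
    fix x y assume "x \<in> pre J'" "y \<in> pre J'"
    then show "x \<oplus> y \<in> pre J'" using ad[of "pi x" "pi y"] by (simp add: pre_def q_add)
  next
    fix x assume "x \<in> pre J'"
    then show "\<ominus> x \<in> pre J'" using ng[of "pi x"] by (simp add: pre_def q_neg)
  next
    fix n h assume "n \<in> C" "h \<in> pre J'"
    then show "nsub R (n \<oplus> h) n \<in> pre J'" using cj[of "pi n" "pi h"] piC
      by (simp add: pre_def q_add q_sub nsub_eq)
  next
    fix i n assume "i \<in> pre J'" "n \<in> C"
    then show "i \<otimes> n \<in> pre J'" using ml[of "pi i" "pi n"] piC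
      by (simp add: pre_def q_mul)
  next
    fix n n' i assume "n \<in> C" "n' \<in> C" "i \<in> pre J'"
    then show "nsub R (n \<otimes> (n' \<oplus> i)) (n \<otimes> n') \<in> pre J'" using th[of "pi n" "pi n'" "pi i"] piC
      by (simp add: pre_def q_mul q_add q_sub nsub_eq)
  qed
qed

lemma image_pre: "J' \<subseteq> carrier Q \<Longrightarrow> pi ` pre J' = J'"
  unfolding pre_def using carrier_Q by auto

lemma image_mem:
  assumes "nr_ideal R J" "I \<subseteq> J" "a \<in> C" "pi a \<in> pi ` J"
  shows "a \<in> J"
proof -
  have ns: "add_normal_subgroup R J" using assms(1) by (simp add: nr_ideal_def)
  obtain j where j: "j \<in> J" "pi a = pi j" using assms by auto
  have jC: "j \<in> C" using j ns_sub[OF ns] by auto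
  have "\<ominus> j \<oplus> a \<in> J" using j coset_eq_iff[OF assms(3) jC] assms(2) by auto
  then have "j \<oplus> (\<ominus> j \<oplus> a) \<in> J" using ns_add[OF ns j(1)] by auto
  then show ?thesis using jC assms(3) by simp
qed

lemma gen_lift1:
  assumes "S \<subseteq> C" "x \<in> gen_add R S"
  shows "pi x \<in> gen_add Q (pi ` S)"
  using assms(2)
proof (induction rule: gen_add.induct)
  case (gen_incl x) then show ?case by (auto intro: gen_add.gen_incl)
next
  case gen_zero then show ?case using gen_add.gen_zero[of Q "pi ` S"] by (simp add: q_zero)
next
  case (gen_neg x)
  have "x \<in> C" using gen_neg.hyps gen_carrier assms(1) by auto
  then show ?case using gen_add.gen_neg[OF gen_neg.IH] by (simp add: q_neg)
next
  case (gen_add x y)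
  have "x \<in> C" "y \<in> C" using gen_add.hyps gen_carrier assms(1) by auto
  then show ?case using gen_add.gen_add[OF gen_add.IH] by (simp add: q_add)
qed

lemma gen_lift2:
  assumes "S \<subseteq> C" "S' \<subseteq> pi ` S" "c \<in> gen_add Q S'"
  shows "\<exists>y \<in> gen_add R S. c = pi y"
  using assms(3)
proof (induction rule: gen_add.induct)
  case (gen_incl x) then show ?case using assms(2) by (auto intro: gen_add.gen_incl)
next
  case gen_zero then show ?case by (auto simp: q_zero intro: gen_add.gen_zero)
next
  case (gen_neg x)
  then obtain y where y: "y \<in> gen_add R S" "x = pi y" by auto
  have "y \<in> C" using y gen_carrier assms(1) by auto
  then show ?case using y by (auto simp: q_neg intro!: bexI[of _ "\<ominus> y"] gen_add.gen_neg)
next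
  case (gen_add x x')
  then obtain y y' where y: "y \<in> gen_add R S" "x = pi y" "y' \<in> gen_add R S" "x' = pi y'" by auto
  have "y \<in> C" "y' \<in> C" using y gen_carrier assms(1) by auto
  then show ?case using y by (auto simp: q_add intro!: bexI[of _ "y \<oplus> y'"] gen_add.gen_add)
qed

end



locale gq = qnr +
  fixes F :: "'g::monoid_mult \<Rightarrow> 'a set"
  assumes grn: "graded_near_ring R F" and gI: "graded_ideal R F I"
begin

lemma F_ns: "add_normal_subgroup R (F s)" using grn by (simp add: graded_near_ring_def)
lemma F_C: "x \<in> F s \<Longrightarrow> x \<in> C" using ns_sub[OF F_ns] by auto
lemma indep: "F s \<inter> gen_add R (\<Union>t\<in>-{s}. F t) = {\<zero>}"
  using grn by (simp add: graded_near_ring_def internal_direct_sum_def)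
lemma I_gen: "I = gen_add R (\<Union>s. I \<inter> F s)"
  using gI by (simp add: graded_ideal_def internal_direct_sum_def)

definition H where "H s = gen_add R (\<Union>t\<in>-{s}. F t)"

lemma H_C: "H s \<subseteq> C" unfolding H_def by (rule gen_carrier) (auto intro: F_C)

lemma H_conj: "n \<in> C \<Longrightarrow> h \<in> H s \<Longrightarrow> n \<oplus> h \<oplus> \<ominus> n \<in> H s"
  unfolding H_def
proof (rule gen_conj)
  show "(\<Union>t\<in>-{s}. F t) \<subseteq> C" by (auto intro: F_C)
  fix m x assume "m \<in> C" "x \<in> (\<Union>t\<in>-{s}. F t)"
  then obtain t where "t \<noteq> s" "x \<in> F t" by auto
  then have "m \<oplus> x \<oplus> \<ominus> m \<in> F t" using ns_conj[OF F_ns \<open>m \<in> C\<close>] by auto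
  then show "m \<oplus> x \<oplus> \<ominus> m \<in> gen_add R (\<Union>t\<in>-{s}. F t)" using \<open>t \<noteq> s\<close>
    by (auto intro: gen_add.gen_incl)
qed

lemma FH_zero: "x \<in> F s \<Longrightarrow> x \<in> H s \<Longrightarrow> x = \<zero>"
  using indep[of s] unfolding H_def by auto

lemma commute:
  assumes x: "x \<in> F s" and y: "y \<in> H s"
  shows "x \<oplus> y = y \<oplus> x"
proof -
  have xC: "x \<in> C" using x F_C by auto
  have yC: "y \<in> C" using y H_C by auto
  have "(x \<oplus> y \<oplus> \<ominus> x) \<oplus> \<ominus> y \<in> H s"
    using H_conj[OF xC y] y unfolding H_def by (auto intro: gen_add.intros)
  then have h: "x \<oplus> y \<oplus> \<ominus> x \<oplus> \<ominus> y \<in> H s" using xC yC by simp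
  have "y \<oplus> \<ominus> x \<oplus> \<ominus> y \<in> F s" using ns_conj[OF F_ns yC ns_neg[OF F_ns x]] .
  then have f: "x \<oplus> y \<oplus> \<ominus> x \<oplus> \<ominus> y \<in> F s" using ns_add[OF F_ns x] by auto
  have c: "x \<oplus> y \<oplus> \<ominus> x \<oplus> \<ominus> y = \<zero>" using FH_zero[OF f h] .
  have eq: "(x \<oplus> y) \<oplus> \<ominus> (y \<oplus> x) = x \<oplus> y \<oplus> \<ominus> x \<oplus> \<ominus> y" using xC yC by simp
  have "\<ominus> (y \<oplus> x) = \<ominus> (x \<oplus> y)" by (rule neg_unique[OF _ _ trans[OF eq c]]) (use xC yC in simp_all)
  then have "\<ominus> (\<ominus> (y \<oplus> x)) = \<ominus> (\<ominus> (x \<oplus> y))" by simp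
  then show ?thesis using xC yC by simp
qed

lemma I_decomp: "i \<in> I \<Longrightarrow> \<exists>a h. a \<in> I \<and> a \<in> F s \<and> h \<in> H s \<and> i = a \<oplus> h"
proof -
  assume "i \<in> I"
  then have "i \<in> gen_add R (\<Union>s. I \<inter> F s)" using I_gen by auto
  then show ?thesis
  proof (induction rule: gen_add.induct)
    case (gen_incl x)
    then obtain t where t: "x \<in> I" "x \<in> F t" by auto
    show ?case
    proof (cases "t = s")
      case True
      then show ?thesis using t ns_zero[OF F_ns] unfolding H_def
        by (intro exI[of _ x] exI[of _ \<zero>]) (auto intro: gen_add.gen_zero)
    next
      case False
      then have "x \<in> H s" using t unfolding H_def by (auto intro: gen_add.gen_incl)
      then show ?thesis using t ns_zero[OF F_ns]
        by (intro exI[of _ \<zero>] exI[of _ x]) auto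
    qed
  next
    case gen_zero
    then show ?case using ns_zero[OF F_ns] unfolding H_def
      by (intro exI[of _ \<zero>] exI[of _ \<zero>]) (auto intro: gen_add.gen_zero)
  next
    case (gen_neg x)
    then obtain a h where ah: "a \<in> I" "a \<in> F s" "h \<in> H s" "x = a \<oplus> h" by auto
    have aC: "a \<in> C" and hC: "h \<in> C" using ah H_C by auto
    have nh: "\<ominus> h \<in> H s" using ah(3) unfolding H_def by (rule gen_add.gen_neg)
    have na: "\<ominus> a \<in> F s" using ns_neg[OF F_ns ah(2)] .
    have "\<ominus> x = \<ominus> h \<oplus> \<ominus> a" using ah aC hC by simp
    also have "\<dots> = \<ominus> a \<oplus> \<ominus> h" using commute[OF na nh] by simp
    finally have "\<ominus> x = \<ominus> a \<oplus> \<ominus> h" .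
    then show ?case using ah na nh I_neg[OF ah(1)] by blast
  next
    case (gen_add x y)
    then obtain a h b k where ah: "a \<in> I" "a \<in> F s" "h \<in> H s" "x = a \<oplus> h"
      and bk: "b \<in> I" "b \<in> F s" "k \<in> H s" "y = b \<oplus> k" by metis
    have C: "a \<in> C" "h \<in> C" "b \<in> C" "k \<in> C" using ah bk H_C by auto
    have "x \<oplus> y = a \<oplus> (h \<oplus> b) \<oplus> k" using ah bk C by simp
    also have "\<dots> = a \<oplus> (b \<oplus> h) \<oplus> k" using commute[OF bk(2) ah(3)] by simp
    also have "\<dots> = (a \<oplus> b) \<oplus> (h \<oplus> k)" using C by simp
    finally have e: "x \<oplus> y = (a \<oplus> b) \<oplus> (h \<oplus> k)" .
    have "h \<oplus> k \<in> H s" using ah(3) bk(3) unfolding H_def by (rule gen_add.gen_add)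
    then show ?case using e ah bk ns_add[OF F_ns ah(2) bk(2)] I_add[OF ah(1) bk(1)] by blast
  qed
qed

lemma key:
  assumes f: "f \<in> F s" and y: "y \<in> H s" and e: "pi f = pi y"
  shows "f \<in> I"
proof -
  have fC: "f \<in> C" using f F_C by auto
  have yC: "y \<in> C" using y H_C by auto
  have "\<ominus> y \<oplus> f \<in> I" using e coset_eq_iff fC yC by auto
  then obtain a h where ah: "a \<in> I" "a \<in> F s" "h \<in> H s" "\<ominus> y \<oplus> f = a \<oplus> h"
    using I_decomp by blast
  have aC: "a \<in> C" and hC: "h \<in> C" using ah H_C by auto
  have "f = y \<oplus> (\<ominus> y \<oplus> f)" using yC fC by simp
  also have "\<dots> = y \<oplus> (a \<oplus> h)" by (simp only: ah(4))
  also have "\<dots> = (y \<oplus> a) \<oplus> h" using yC aC hC by simp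
  also have "\<dots> = (a \<oplus> y) \<oplus> h" by (simp only: commute[OF ah(2) y])
  finally have "\<ominus> a \<oplus> f = y \<oplus> h" using aC yC hC by simp
  moreover have "y \<oplus> h \<in> H s" using y ah(3) unfolding H_def by (rule gen_add.gen_add)
  moreover have "\<ominus> a \<oplus> f \<in> F s" using ns_add[OF F_ns ns_neg[OF F_ns ah(2)] f] .
  ultimately have "\<ominus> a \<oplus> f = \<zero>" using FH_zero by auto
  then have "a \<oplus> (\<ominus> a \<oplus> f) = a \<oplus> \<zero>" by simp
  then have "f = a" using aC fC by simp
  then show ?thesis using ah by simp
qed

end



context gq
begin

lemma graded_image:
  assumes gP: "graded_ideal R F P" and IP: "I \<subseteq> P"
  shows "graded_ideal Q (quot_grading R I F) (pi ` P)"
proof -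
  have idP: "nr_ideal R P"
    using gP unfolding graded_ideal_def internal_direct_sum_def by (rule conjunct1)
  have dP: "P = gen_add R (\<Union>s. P \<inter> F s)"
    using gP unfolding graded_ideal_def internal_direct_sum_def by (rule conjunct1[OF conjunct2])
  have PC: "P \<subseteq> C" using idP ns_sub by (auto simp: nr_ideal_def)
  have idQ: "nr_ideal Q (pi ` P)" using ideal_image[OF idP] .
  have nsQ: "add_normal_subgroup Q (pi ` P)" using idQ by (simp add: nr_ideal_def)
  have gen: "pi ` P = gen_add Q (\<Union>s. pi ` P \<inter> pi ` F s)"
  proof
    show "gen_add Q (\<Union>s. pi ` P \<inter> pi ` F s) \<subseteq> pi ` P"
      by (rule gen_least[OF nsQ]) auto
    show "pi ` P \<subseteq> gen_add Q (\<Union>s. pi ` P \<inter> pi ` F s)"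
    proof
      fix c assume "c \<in> pi ` P"
      then obtain x where x: "x \<in> P" "c = pi x" by auto
      have xg: "x \<in> gen_add R (\<Union>s. P \<inter> F s)"
        using x(1) by (rule subst[OF dP, where P="\<lambda>Z. x \<in> Z"])
      have SC: "(\<Union>s. P \<inter> F s) \<subseteq> C" using PC by blast
      have m1: "pi x \<in> gen_add Q (pi ` (\<Union>s. P \<inter> F s))"
        by (rule gen_lift1[OF SC xg])
      have sub1: "pi ` (\<Union>s. P \<inter> F s) \<subseteq> (\<Union>s. pi ` P \<inter> pi ` F s)" by blast
      have "pi x \<in> gen_add Q (\<Union>s. pi ` P \<inter> pi ` F s)" by (rule subsetD[OF gen_mono[OF sub1] m1])
      then show "c \<in> gen_add Q (\<Union>s. pi ` P \<inter> pi ` F s)" using x(2) by simp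
    qed
  qed
  have nsP: "add_normal_subgroup R P" using idP by (simp add: nr_ideal_def)
  have ind: "(pi ` P \<inter> pi ` F s) \<inter> gen_add Q (\<Union>t\<in>-{s}. pi ` P \<inter> pi ` F t) = {nzero Q}" for s
  proof
    show "{nzero Q} \<subseteq> (pi ` P \<inter> pi ` F s) \<inter> gen_add Q (\<Union>t\<in>-{s}. pi ` P \<inter> pi ` F t)"
    proof -
      have "pi \<zero> \<in> pi ` P" "pi \<zero> \<in> pi ` F s" using ns_zero[OF F_ns] ns_zero[OF nsP] by blast+
      then show ?thesis using gen_add.gen_zero[of Q] by (simp add: q_zero)
    qed
    show "(pi ` P \<inter> pi ` F s) \<inter> gen_add Q (\<Union>t\<in>-{s}. pi ` P \<inter> pi ` F t) \<subseteq> {nzero Q}"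
    proof
      fix c assume c: "c \<in> (pi ` P \<inter> pi ` F s) \<inter> gen_add Q (\<Union>t\<in>-{s}. pi ` P \<inter> pi ` F t)"
      then obtain f where f: "f \<in> F s" "c = pi f" by auto
      have "gen_add Q (\<Union>t\<in>-{s}. pi ` P \<inter> pi ` F t) \<subseteq> gen_add Q (\<Union>t\<in>-{s}. pi ` F t)"
        by (rule gen_mono) auto
      then have "c \<in> gen_add Q (\<Union>t\<in>-{s}. pi ` F t)" using c by auto
      then have "\<exists>y \<in> gen_add R (\<Union>t\<in>-{s}. F t). c = pi y"
        by (rule gen_lift2[rotated 2]) (auto intro: F_C)
      then obtain y where y: "y \<in> H s" "c = pi y" unfolding H_def by auto
      have "f \<in> I" using key[OF f(1) y(1)] f y by simp
      then have "pi f = pi \<zero>" using coset_in_I[of f] F_C[OF f(1)] by (simp add: coset_zero)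
      then show "c \<in> {nzero Q}" using f by (simp add: q_zero)
    qed
  qed
  show ?thesis unfolding graded_ideal_def internal_direct_sum_def quot_grading_def
    by (intro conjI allI idQ gen ind)
qed

lemma graded_pre:
  assumes gJ: "graded_ideal Q (quot_grading R I F) J'"
  shows "graded_ideal R F (pre J')"
proof -
  have idJ: "nr_ideal Q J'"
    using gJ unfolding graded_ideal_def internal_direct_sum_def quot_grading_def by (rule conjunct1)
  have dJ: "J' = gen_add Q (\<Union>s. J' \<inter> pi ` F s)"
    using gJ unfolding graded_ideal_def internal_direct_sum_def quot_grading_def by (rule conjunct1[OF conjunct2])
  have idP: "nr_ideal R (pre J')" and IP: "I \<subseteq> pre J'" using ideal_pre[OF idJ] by auto
  have nsP: "add_normal_subgroup R (pre J')" using idP by (simp add: nr_ideal_def)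
  have preC: "pre J' \<subseteq> C" by (auto simp: pre_def)
  have SC: "(\<Union>s. pre J' \<inter> F s) \<subseteq> C" using preC by auto
  have Isub: "I \<subseteq> gen_add R (\<Union>s. pre J' \<inter> F s)"
  proof -
    have "(\<Union>s. I \<inter> F s) \<subseteq> (\<Union>s. pre J' \<inter> F s)" using IP by blast
    then have "gen_add R (\<Union>s. I \<inter> F s) \<subseteq> gen_add R (\<Union>s. pre J' \<inter> F s)" by (rule gen_mono)
    then show ?thesis using equalityD1[OF I_gen] by (rule order_trans[rotated])
  qed
  have gen: "pre J' = gen_add R (\<Union>s. pre J' \<inter> F s)"
  proof
    show "gen_add R (\<Union>s. pre J' \<inter> F s) \<subseteq> pre J'"
      by (rule gen_least[OF nsP]) blast
    show "pre J' \<subseteq> gen_add R (\<Union>s. pre J' \<inter> F s)"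
    proof
      fix x assume x: "x \<in> pre J'"
      then have xC: "x \<in> C" and pxJ: "pi x \<in> J'" by (auto simp: pre_def)
      from pxJ have pig: "pi x \<in> gen_add Q (\<Union>s. J' \<inter> pi ` F s)" by (rule subst[OF dJ, where P="\<lambda>Z. pi x \<in> Z"])
      have sub2: "(\<Union>s. J' \<inter> pi ` F s) \<subseteq> pi ` (\<Union>s. pre J' \<inter> F s)"
      proof
        fix c assume "c \<in> (\<Union>s. J' \<inter> pi ` F s)"
        then obtain s f where "c \<in> J'" "f \<in> F s" "c = pi f" by blast
        then show "c \<in> pi ` (\<Union>s. pre J' \<inter> F s)" using F_C by (auto simp: pre_def)
      qed
      obtain y where y: "y \<in> gen_add R (\<Union>s. pre J' \<inter> F s)" "pi x = pi y"
        using gen_lift2[OF SC sub2 pig] by blast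
      have yC: "y \<in> C" using y(1) gen_carrier[OF SC] by blast
      have "\<ominus> y \<oplus> x \<in> I" using y(2) coset_eq_iff xC yC by auto
      then have yx: "\<ominus> y \<oplus> x \<in> gen_add R (\<Union>s. pre J' \<inter> F s)" using Isub by blast
      have "y \<oplus> (\<ominus> y \<oplus> x) \<in> gen_add R (\<Union>s. pre J' \<inter> F s)"
        by (rule gen_add.gen_add[OF y(1) yx])
      then show "x \<in> gen_add R (\<Union>s. pre J' \<inter> F s)" using xC yC by simp
    qed
  qed
  have ind: "(pre J' \<inter> F s) \<inter> gen_add R (\<Union>t\<in>-{s}. pre J' \<inter> F t) = {\<zero>}" for s
  proof
    have "\<zero> \<in> pre J'" "\<zero> \<in> F s" using ns_zero[OF F_ns] ns_zero[OF nsP] by blast+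
    then show "{\<zero>} \<subseteq> (pre J' \<inter> F s) \<inter> gen_add R (\<Union>t\<in>-{s}. pre J' \<inter> F t)"
      using gen_add.gen_zero[of R] by blast
    have "gen_add R (\<Union>t\<in>-{s}. pre J' \<inter> F t) \<subseteq> gen_add R (\<Union>t\<in>-{s}. F t)"
      by (rule gen_mono) blast
    then show "(pre J' \<inter> F s) \<inter> gen_add R (\<Union>t\<in>-{s}. pre J' \<inter> F t) \<subseteq> {\<zero>}"
      using indep[of s] by blast
  qed
  show ?thesis unfolding graded_ideal_def internal_direct_sum_def
    by (intro conjI allI idP gen ind)
qed

end

theorem theorem14:
  fixes R :: "('a, 'b) nearring_scheme" and F :: "'g::monoid_mult \<Rightarrow> 'a set"
    and P I :: "'a set"
  assumes "graded_near_ring R F"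
    and "graded_ideal R F P" and "graded_ideal R F I" and "I \<subseteq> P"
    and "graded_almost_prime R F P"
  shows "graded_almost_prime (quot R I) (quot_grading R I F) (coset R I ` P)"
proof -
  have nrR: "near_ring R" using assms(1) by (simp add: graded_near_ring_def)
  have idI: "nr_ideal R I" using assms(3) by (simp add: graded_ideal_def)
  interpret gq R I F
    by (unfold_locales) (use nrR idI assms(1,3) in auto)
  have idP: "nr_ideal R P" using assms(2) by (simp add: graded_ideal_def)
  have PC: "P \<subseteq> C" using idP ns_sub by (auto simp: nr_ideal_def)
  have ap0: "\<forall>A B. graded_ideal R F A \<and> graded_ideal R F B \<and> set_prod R A B \<subseteq> P \<and>
      \<not> set_prod R A B \<subseteq> set_prod R P P \<inter> C \<longrightarrow> A \<subseteq> P \<or> B \<subseteq> P"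
    using assms(5) unfolding graded_almost_prime_def by (rule conjunct2)
  show ?thesis unfolding graded_almost_prime_def
  proof (intro conjI allI impI)
    show "graded_ideal Q (quot_grading R I F) (pi ` P)" using graded_image[OF assms(2,4)] .
    fix I' J' assume h: "graded_ideal Q (quot_grading R I F) I' \<and> graded_ideal Q (quot_grading R I F) J' \<and>
      set_prod Q I' J' \<subseteq> pi ` P \<and> \<not> set_prod Q I' J' \<subseteq> set_prod Q (pi ` P) (pi ` P) \<inter> carrier Q"
    have hI: "graded_ideal Q (quot_grading R I F) I'" and hJ: "graded_ideal Q (quot_grading R I F) J'"
      and hs: "set_prod Q I' J' \<subseteq> pi ` P"
      and hn: "\<not> set_prod Q I' J' \<subseteq> set_prod Q (pi ` P) (pi ` P) \<inter> carrier Q"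
      using h by blast+
    have gA: "graded_ideal R F (pre I')" and gB: "graded_ideal R F (pre J')"
      using graded_pre[OF hI] graded_pre[OF hJ] by blast+
    have idI': "nr_ideal Q I'" and idJ': "nr_ideal Q J'"
      using hI hJ unfolding graded_ideal_def by blast+
    have I'C: "I' \<subseteq> carrier Q"
      using idI' unfolding nr_ideal_def add_normal_subgroup_def by (elim conjE)
    have J'C: "J' \<subseteq> carrier Q"
      using idJ' unfolding nr_ideal_def add_normal_subgroup_def by (elim conjE)
    have sub: "set_prod R (pre I') (pre J') \<subseteq> P"
    proof
      fix z assume "z \<in> set_prod R (pre I') (pre J')"
      then obtain x y where xy: "x \<in> pre I'" "y \<in> pre J'" "z = x \<otimes> y"
        unfolding set_prod_def by blast
      then have C: "x \<in> C" "y \<in> C" and m: "pi x \<in> I'" "pi y \<in> J'" by (auto simp: pre_def)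
      have "nmul Q (pi x) (pi y) \<in> set_prod Q I' J'" using m unfolding set_prod_def by blast
      then have "nmul Q (pi x) (pi y) \<in> pi ` P" using hs by blast
      then have "pi (x \<otimes> y) \<in> pi ` P" using C by (simp add: q_mul)
      then show "z \<in> P" using image_mem[OF idP assms(4)] C xy by auto
    qed
    have nsub: "\<not> set_prod R (pre I') (pre J') \<subseteq> set_prod R P P \<inter> C"
    proof
      assume a: "set_prod R (pre I') (pre J') \<subseteq> set_prod R P P \<inter> C"
      obtain W where W: "W \<in> set_prod Q I' J'" "W \<notin> set_prod Q (pi ` P) (pi ` P) \<inter> carrier Q"
        using hn by blast
      obtain U V where UV: "U \<in> I'" "V \<in> J'" "W = nmul Q U V"
        using W(1) unfolding set_prod_def by blast
      have nU: "nmul Q U V \<notin> set_prod Q (pi ` P) (pi ` P) \<inter> carrier Q" using W UV by simp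
      obtain u where u: "u \<in> C" "U = pi u" using UV I'C carrier_Q by auto
      obtain v where v: "v \<in> C" "V = pi v" using UV J'C carrier_Q by auto
      have "u \<otimes> v \<in> set_prod R (pre I') (pre J')"
        using u v UV unfolding set_prod_def pre_def by blast
      then have "u \<otimes> v \<in> set_prod R P P" using a by blast
      then obtain p q where pq: "p \<in> P" "q \<in> P" "u \<otimes> v = p \<otimes> q"
        unfolding set_prod_def by blast
      have pqC: "p \<in> C" "q \<in> C" using pq PC by blast+
      have "nmul Q U V = pi (u \<otimes> v)" using u v by (simp add: q_mul)
      also have "\<dots> = nmul Q (pi p) (pi q)" using pq(3) pqC by (simp add: q_mul)
      finally have e: "nmul Q U V = nmul Q (pi p) (pi q)" .
      have "nmul Q U V \<in> carrier Q" using u v carrier_Q by (simp add: q_mul)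
      moreover have "nmul Q (pi p) (pi q) \<in> set_prod Q (pi ` P) (pi ` P)"
        unfolding set_prod_def using pq by blast
      ultimately show False using nU e by simp
    qed
    have "pre I' \<subseteq> P \<or> pre J' \<subseteq> P" using ap0 gA gB sub nsub by blast
    then show "I' \<subseteq> pi ` P \<or> J' \<subseteq> pi ` P"
    proof
      assume "pre I' \<subseteq> P"
      then have "pi ` pre I' \<subseteq> pi ` P" by (rule image_mono)
      then show ?thesis unfolding image_pre[OF I'C] by (rule disjI1)
    next
      assume "pre J' \<subseteq> P"
      then have "pi ` pre J' \<subseteq> pi ` P" by (rule image_mono)
      then show ?thesis unfolding image_pre[OF J'C] by (rule disjI2)
    qed
  qed
qed


end
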